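(* Let $\Omega\subset\mathbb{R}^n$ be bounded. If $\varphi\in\Phi_{\mathrm w}(\Omega)$ satisfies condition (A1), then it satisfies conditions (A0) and (A2).
   Context: A function $f:[0,\infty)\to[0,\infty]$ is $a$-almost increasing ($a\ge1$) if $f(s)\le a f(t)$ for all $s\le t$. A function $\varphi:\Omega\times[0,\infty)\to[0,\infty]$ is a weak $\Phi$-function, $\varphi\in\Phi_{\mathrm w}(\Omega)$, if for a.e. $x\in\Omega$: $x\mapsto\varphi(x,|f(x)|)$ is measurable for every measurable $f:\Omega\to\mathbb{R}$; $t\mapsto\varphi(x,t)$ is increasing (non-decreasing); $\varphi(x,0)=\lim_{t\to0^+}\varphi(x,t)=0$ and $\lim_{t\to\infty}\varphi(x,t)=\infty$; and $t\mapsto\varphi(x,t)/t$ is $a$-almost increasing on $(0,\infty)$ with $a\ge1$ independent of $x$. The left-inverse is $\varphi^{-1}(x,\tau):=\inf\{t\ge0:\varphi(x,t)\ge\tau\}$. Condition (A0): there exists $\beta\in(0,1]$ with $\beta\le\varphi^{-1}(x,1)\le1/\beta$ for a.e. $x\in\Omega$. Condition (A1): there exists $\beta\in(0,1]$ such that for every ball $B\subset\mathbb{R}^n$ and a.e. $x,y\in\Omega\cap B$, $\beta\varphi^{-1}(x,\tau)\le\varphi^{-1}(y,\tau)$ for all $\tau\in[1,1/|B|]$. Condition (A2): for every $\sigma>0$ there exist $\beta\in(0,1]$ and $h\in L^1(\Omega)\cap L^\infty(\Omega)$, $h\ge0$, such that for a.e. $x,y\in\Omega$, $\beta\varphi^{-1}(x,\tau)\le\varphi^{-1}(y,\tau+h(x)+h(y))$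 for all $\tau\in[0,\sigma]$. *)

theory Defs
  imports "HOL-Analysis.Analysis"
begin

text \<open>Generalized Orlicz functions \<open>\<phi> :: 'a \<Rightarrow> real \<Rightarrow> ennreal\<close> on \<open>\<Omega> \<subseteq> \<real>\<^sup>n\<close>
  (the type \<open>'a\<close> is a Euclidean space); only arguments \<open>t \<ge> 0\<close> matter.
  "For a.e. x in \<Omega>" is rendered as \<open>AE x in lebesgue. x \<in> \<Omega> \<longrightarrow> \<dots>\<close>.\<close>

definition almost_increasing_quot :: "real \<Rightarrow> (real \<Rightarrow> ennreal) \<Rightarrow> bool" where
  "almost_increasing_quot a f \<longleftrightarrow>
     (\<forall>s t. 0 < s \<and> s \<le> t \<longrightarrow> f s / ennreal s \<le> ennreal a * (f t / ennreal t))"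

definition weak_Phi :: "'a::euclidean_space set \<Rightarrow> ('a \<Rightarrow> real \<Rightarrow> ennreal) \<Rightarrow> bool" where
  "weak_Phi \<Omega> \<phi> \<longleftrightarrow>
     (\<forall>f::'a \<Rightarrow> real. f \<in> borel_measurable (lebesgue_on \<Omega>) \<longrightarrow>
         (\<lambda>x. \<phi> x \<bar>f x\<bar>) \<in> borel_measurable (lebesgue_on \<Omega>)) \<and>
     (\<exists>a\<ge>1. AE x in lebesgue. x \<in> \<Omega> \<longrightarrow>
         (\<forall>s t. 0 \<le> s \<and> s \<le> t \<longrightarrow> \<phi> x s \<le> \<phi> x t) \<and>
         \<phi> x 0 = 0 \<and> (\<phi> x \<longlongrightarrow> 0) (at_right 0) \<and>
         (\<phi> x \<longlongrightarrow> \<infinity>) at_top \<and>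
         almost_increasing_quot a (\<phi> x))"

definition phi_inv :: "('a \<Rightarrow> real \<Rightarrow> ennreal) \<Rightarrow> 'a \<Rightarrow> real \<Rightarrow> real" where
  "phi_inv \<phi> x \<tau> = Inf {t. 0 \<le> t \<and> ennreal \<tau> \<le> \<phi> x t}"

definition cond_A0 :: "'a::euclidean_space set \<Rightarrow> ('a \<Rightarrow> real \<Rightarrow> ennreal) \<Rightarrow> bool" where
  "cond_A0 \<Omega> \<phi> \<longleftrightarrow> (\<exists>\<beta>. 0 < \<beta> \<and> \<beta> \<le> 1 \<and>
     (AE x in lebesgue. x \<in> \<Omega> \<longrightarrow> \<beta> \<le> phi_inv \<phi> x 1 \<and> phi_inv \<phi> x 1 \<le> 1 / \<beta>))"

definition cond_A1 :: "'a::euclidean_space set \<Rightarrow> ('a \<Rightarrow> real \<Rightarrow> ennreal) \<Rightarrow> bool" where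
  "cond_A1 \<Omega> \<phi> \<longleftrightarrow> (\<exists>\<beta>. 0 < \<beta> \<and> \<beta> \<le> 1 \<and>
     (\<forall>c r. 0 < r \<longrightarrow>
        (AE x in lebesgue. x \<in> \<Omega> \<inter> ball c r \<longrightarrow>
          (AE y in lebesgue. y \<in> \<Omega> \<inter> ball c r \<longrightarrow>
            (\<forall>\<tau>. 1 \<le> \<tau> \<and> \<tau> \<le> 1 / measure lebesgue (ball c r) \<longrightarrow>
               \<beta> * phi_inv \<phi> x \<tau> \<le> phi_inv \<phi> y \<tau>)))))"

definition cond_A2 :: "'a::euclidean_space set \<Rightarrow> ('a \<Rightarrow> real \<Rightarrow> ennreal) \<Rightarrow> bool" where
  "cond_A2 \<Omega> \<phi> \<longleftrightarrow> (\<forall>\<sigma>>0. \<exists>\<beta> h. 0 < \<beta> \<and> \<beta> \<le> 1 \<and>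
     integrable (lebesgue_on \<Omega>) h \<and>
     (\<exists>M. AE x in lebesgue_on \<Omega>. \<bar>h x\<bar> \<le> M) \<and>
     (\<forall>x\<in>\<Omega>. 0 \<le> h x) \<and>
     (AE x in lebesgue. x \<in> \<Omega> \<longrightarrow>
        (AE y in lebesgue. y \<in> \<Omega> \<longrightarrow>
          (\<forall>\<tau>. 0 \<le> \<tau> \<and> \<tau> \<le> \<sigma> \<longrightarrow>
             \<beta> * phi_inv \<phi> x \<tau> \<le> phi_inv \<phi> y (\<tau> + h x + h y)))))"

end

theory Submission
  imports Defs
begin

lemma ae_bounds_abstract:
  fixes g :: "'a \<Rightarrow> real"
  assumes b: "\<beta> > 0" and pos: "AE x in M. x \<in> D \<longrightarrow> 0 < g x"
  and A: "AE x in M. x \<in> D \<longrightarrow> (AE y in M. y \<in> D \<longrightarrow> \<beta> * g x \<le> g y)"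
  shows "\<exists>L U. 0 < L \<and> (AE x in M. x \<in> D \<longrightarrow> L \<le> g x \<and> g x \<le> U)"
proof (cases "AE x in M. x \<notin> D")
  case True
  show ?thesis
    by (rule exI[of _ 1], rule exI[of _ 1]) (use True in \<open>auto elim: eventually_mono\<close>)
next
  case False
  have both: "AE x in M. x \<in> D \<longrightarrow> 0 < g x \<and> (AE y in M. y \<in> D \<longrightarrow> \<beta> * g x \<le> g y)"
    using pos A by eventually_elim auto
  have "\<exists>x0. x0 \<in> D \<and> 0 < g x0 \<and> (AE y in M. y \<in> D \<longrightarrow> \<beta> * g x0 \<le> g y)"
  proof (rule ccontr)
    assume "\<not> ?thesis"
    then have "AE x in M. x \<notin> D" using both by (auto elim: eventually_mono)
    with False show False by simp
  qed
  then obtain x0 where x0: "x0 \<in> D" "0 < g x0" and lo: "AE y in M. y \<in> D \<longrightarrow> \<beta> * g x0 \<le> g y"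
    by blast
  have "\<exists>N::nat. \<not> (AE y in M. y \<in> D \<longrightarrow> real N \<le> g y)"
  proof (rule ccontr)
    assume "\<not> ?thesis"
    then have "\<forall>N::nat. AE y in M. y \<in> D \<longrightarrow> real N \<le> g y" by auto
    then have "AE y in M. \<forall>N::nat. y \<in> D \<longrightarrow> real N \<le> g y" by (rule AE_all_countable[THEN iffD2])
    then have "AE y in M. y \<notin> D"
    proof (rule eventually_mono)
      fix y assume h: "\<forall>N::nat. y \<in> D \<longrightarrow> real N \<le> g y"
      show "y \<notin> D"
      proof
        assume "y \<in> D"
        then have "real (nat \<lceil>g y\<rceil> + 1) \<le> g y" using h by blast
        moreover have "g y \<le> real (nat \<lceil>g y\<rceil>)" by (rule real_nat_ceiling_ge)
        ultimately show False by simp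
      qed
    qed
    with False show False by simp
  qed
  then obtain N :: nat where N: "\<not> (AE y in M. y \<in> D \<longrightarrow> real N \<le> g y)" by blast
  have up: "AE x in M. x \<in> D \<longrightarrow> g x \<le> real N / \<beta>"
    using A
  proof (rule eventually_mono)
    fix x assume h: "x \<in> D \<longrightarrow> (AE y in M. y \<in> D \<longrightarrow> \<beta> * g x \<le> g y)"
    show "x \<in> D \<longrightarrow> g x \<le> real N / \<beta>"
    proof
      assume xD: "x \<in> D"
      show "g x \<le> real N / \<beta>"
      proof (rule ccontr)
        assume "\<not> g x \<le> real N / \<beta>"
        then have "real N < \<beta> * g x" using b by (simp add: field_simps)
        then have "AE y in M. y \<in> D \<longrightarrow> real N \<le> g y"
          using h xD by (auto elim: eventually_mono)
        with N show False by simp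
      qed
    qed
  qed
  show ?thesis
    apply (rule exI[of _ "\<beta> * g x0"], rule exI[of _ "real N / \<beta>"])
    using b x0 lo up by (auto elim!: eventually_elim2)
qed

lemma phi_nonempty:
  fixes f :: "real \<Rightarrow> ennreal"
  assumes liminf: "(f \<longlongrightarrow> \<infinity>) at_top"
  shows "{t. 0 \<le> t \<and> ennreal \<tau> \<le> f t} \<noteq> {}"
proof -
  have "eventually (\<lambda>t. ennreal \<tau> < f t) at_top"
    by (rule order_tendstoD(1)[OF liminf]) simp
  then obtain N where N: "\<forall>n\<ge>N. ennreal \<tau> < f n" by (auto simp: eventually_at_top_linorder)
  then have "max N 0 \<in> {t. 0 \<le> t \<and> ennreal \<tau> \<le> f t}" by (auto intro: less_imp_le)
  then show ?thesis by blast
qed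

lemma phi_pos:
  fixes f :: "real \<Rightarrow> ennreal"
  assumes f0: "f 0 = 0" and lim0: "(f \<longlongrightarrow> 0) (at_right 0)" and liminf: "(f \<longlongrightarrow> \<infinity>) at_top"
    and tau: "0 < \<tau>"
  shows "0 < Inf {t. 0 \<le> t \<and> ennreal \<tau> \<le> f t}"
proof -
  have "eventually (\<lambda>t. f t < ennreal \<tau>) (at_right 0)"
    by (rule order_tendstoD(2)[OF lim0]) (use tau in simp)
  then obtain b where b: "b > 0" "\<forall>y>0. y < b \<longrightarrow> f y < ennreal \<tau>"
    by (auto simp: eventually_at_right_field)
  have "b \<le> Inf {t. 0 \<le> t \<and> ennreal \<tau> \<le> f t}"
  proof (rule cInf_greatest)
    show "{t. 0 \<le> t \<and> ennreal \<tau> \<le> f t} \<noteq> {}" by (rule phi_nonempty[OF liminf])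
  next
    fix t assume t: "t \<in> {t. 0 \<le> t \<and> ennreal \<tau> \<le> f t}"
    show "b \<le> t"
    proof (rule ccontr)
      assume "\<not> b \<le> t"
      then have tb: "t < b" by simp
      show False
      proof (cases "t = 0")
        case True
        then show False using t f0 tau by simp
      next
        case False
        then have "f t < ennreal \<tau>" using b tb t by auto
        moreover have "ennreal \<tau> \<le> f t" using t by simp
        ultimately show False by simp
      qed
    qed
  qed
  then show ?thesis using b by simp
qed

lemma inv_mono:
  fixes f :: "real \<Rightarrow> ennreal"
  assumes "{t. 0 \<le> t \<and> ennreal \<tau>' \<le> f t} \<noteq> {}" "\<tau> \<le> \<tau>'"
  shows "Inf {t. 0 \<le> t \<and> ennreal \<tau> \<le> f t} \<le> Inf {t. 0 \<le> t \<and> ennreal \<tau>' \<le> f t}"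
proof (rule cInf_superset_mono[OF assms(1)])
  show "bdd_below {t. 0 \<le> t \<and> ennreal \<tau> \<le> f t}" by (rule bdd_belowI[of _ 0]) auto
  show "{t. 0 \<le> t \<and> ennreal \<tau>' \<le> f t} \<subseteq> {t. 0 \<le> t \<and> ennreal \<tau> \<le> f t}"
    using assms(2) by (auto intro: order_trans[OF ennreal_leI])
qed

lemma small_ball:
  assumes "0 < \<tau>"
  shows "\<exists>r>0. \<forall>c::'a::euclidean_space. measure lebesgue (ball c r) \<le> 1 / \<tau>"
proof -
  define C where "C = measure lborel (ball (0::'a) 1)"
  have C0: "0 \<le> C" unfolding C_def by simp
  define r where "r = min 1 (1 / (\<tau> * (C + 1)))"
  have r0: "0 < r" using assms C0 by (simp add: r_def)
  have r1: "r \<le> 1" by (simp add: r_def)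
  have rle: "r \<le> 1 / (\<tau> * (C + 1))" by (simp add: r_def)
  have "r ^ DIM('a) \<le> r ^ 1"
    by (rule power_decreasing) (use r0 r1 DIM_positive in auto)
  then have p: "r ^ DIM('a) \<le> r" by simp
  have "C * r ^ DIM('a) \<le> C * r" by (rule mult_left_mono[OF p C0])
  also have "\<dots> \<le> C * (1 / (\<tau> * (C + 1)))" by (rule mult_left_mono[OF rle C0])
  also have "\<dots> = (C / (C + 1)) * (1 / \<tau>)" by simp
  also have "\<dots> \<le> 1 * (1 / \<tau>)"
    by (rule mult_right_mono) (use assms C0 in auto)
  also have "\<dots> = 1 / \<tau>" by simp
  finally have *: "C * r ^ DIM('a) \<le> 1 / \<tau>" .
  show ?thesis
  proof (intro exI[of _ r] conjI allI)
    fix c :: 'a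
    have "measure lebesgue (ball c r) = measure lborel (ball c r)" by simp
    also have "\<dots> = r ^ DIM('a) * C" unfolding C_def by (rule content_ball_conv_unit_ball) (use r0 in simp)
    finally show "measure lebesgue (ball c r) \<le> 1 / \<tau>" using * by (simp add: mult.commute)
  qed (use r0 in simp)
qed

lemma bounds_tau:
  fixes \<Omega> :: "'a::euclidean_space set" and \<phi> :: "'a \<Rightarrow> real \<Rightarrow> ennreal"
  assumes bd: "bounded \<Omega>" and wp: "weak_Phi \<Omega> \<phi>" and a1: "cond_A1 \<Omega> \<phi>" and tau: "1 \<le> \<tau>"
  shows "\<exists>L U. 0 < L \<and> (AE x in lebesgue. x \<in> \<Omega> \<longrightarrow> L \<le> phi_inv \<phi> x \<tau> \<and> phi_inv \<phi> x \<tau> \<le> U)"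
proof -
  obtain \<beta> where \<beta>: "0 < \<beta>" and A1: "\<forall>c r. 0 < r \<longrightarrow>
        (AE x in lebesgue. x \<in> \<Omega> \<inter> ball c r \<longrightarrow>
          (AE y in lebesgue. y \<in> \<Omega> \<inter> ball c r \<longrightarrow>
            (\<forall>\<tau>. 1 \<le> \<tau> \<and> \<tau> \<le> 1 / measure lebesgue (ball c r) \<longrightarrow>
               \<beta> * phi_inv \<phi> x \<tau> \<le> phi_inv \<phi> y \<tau>)))"
    using a1 unfolding cond_A1_def by (elim exE conjE) (rule that; assumption)
  obtain a where W: "AE x in lebesgue. x \<in> \<Omega> \<longrightarrow>
         (\<forall>s t. 0 \<le> s \<and> s \<le> t \<longrightarrow> \<phi> x s \<le> \<phi> x t) \<and>
         \<phi> x 0 = 0 \<and> (\<phi> x \<longlongrightarrow> 0) (at_right 0) \<and>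
         (\<phi> x \<longlongrightarrow> \<infinity>) at_top \<and>
         almost_increasing_quot a (\<phi> x)"
    using wp unfolding weak_Phi_def by (elim exE conjE) (rule that; assumption)
  have pos: "AE x in lebesgue. x \<in> \<Omega> \<longrightarrow> 0 < phi_inv \<phi> x \<tau>"
    using W
  proof (rule eventually_mono)
    fix x assume h: "x \<in> \<Omega> \<longrightarrow>
         (\<forall>s t. 0 \<le> s \<and> s \<le> t \<longrightarrow> \<phi> x s \<le> \<phi> x t) \<and>
         \<phi> x 0 = 0 \<and> (\<phi> x \<longlongrightarrow> 0) (at_right 0) \<and>
         (\<phi> x \<longlongrightarrow> \<infinity>) at_top \<and>
         almost_increasing_quot a (\<phi> x)"
    show "x \<in> \<Omega> \<longrightarrow> 0 < phi_inv \<phi> x \<tau>"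
    proof
      assume x: "x \<in> \<Omega>"
      note hx = mp[OF h x]
      note f0 = hx[THEN conjunct2, THEN conjunct1]
      note l0 = hx[THEN conjunct2, THEN conjunct2, THEN conjunct1]
      note li = hx[THEN conjunct2, THEN conjunct2, THEN conjunct2, THEN conjunct1]
      have "0 < (1::real)" by simp
      show "0 < phi_inv \<phi> x \<tau>" unfolding phi_inv_def
        by (rule phi_pos[OF f0 l0 li]) (use tau in linarith)
    qed
  qed
  obtain r where r: "r > 0" "\<forall>c::'a. measure lebesgue (ball c r) \<le> 1 / \<tau>"
    using small_ball[of \<tau>] tau by auto
  obtain R where R: "\<Omega> \<subseteq> cball (0::'a) R"
  proof -
    obtain b where "\<forall>x\<in>\<Omega>. norm x \<le> b" using bd bounded_pos by blast
    then have "\<Omega> \<subseteq> cball (0::'a) b" by (auto simp: mem_cball_0)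
    then show ?thesis by (rule that)
  qed
  have "\<exists>K. finite K \<and> cball (0::'a) R \<subseteq> (\<Union>c\<in>K. ball c r)"
  proof (rule compactE_image[OF compact_cball[of 0 R], of "cball (0::'a) R" "\<lambda>c. ball c r"])
    show "\<And>T. T \<in> cball (0::'a) R \<Longrightarrow> open (ball T r)" by simp
    show "\<And>C'. C' \<subseteq> cball (0::'a) R \<Longrightarrow> finite C' \<Longrightarrow> cball (0::'a) R \<subseteq> (\<Union>c\<in>C'. ball c r) \<Longrightarrow>
       \<exists>K. finite K \<and> cball (0::'a) R \<subseteq> (\<Union>c\<in>K. ball c r)" by blast
    show "cball (0::'a) R \<subseteq> (\<Union>c\<in>cball (0::'a) R. ball c r)"
    proof
      fix x :: 'a assume "x \<in> cball (0::'a) R"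
      moreover have "x \<in> ball x r" using r(1) by simp
      ultimately show "x \<in> (\<Union>c\<in>cball (0::'a) R. ball c r)" by (rule UN_I)
    qed
  qed
  then obtain K where K: "finite K" "cball (0::'a) R \<subseteq> (\<Union>c\<in>K. ball c r)" by blast
  have loc: "\<forall>c\<in>K. \<exists>L U. 0 < L \<and> (AE x in lebesgue. x \<in> \<Omega> \<inter> ball c r \<longrightarrow> L \<le> phi_inv \<phi> x \<tau> \<and> phi_inv \<phi> x \<tau> \<le> U)"
  proof
    fix c assume "c \<in> K"
    show "\<exists>L U. 0 < L \<and> (AE x in lebesgue. x \<in> \<Omega> \<inter> ball c r \<longrightarrow> L \<le> phi_inv \<phi> x \<tau> \<and> phi_inv \<phi> x \<tau> \<le> U)"
    proof (rule ae_bounds_abstract[OF \<beta>])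
      show "AE x in lebesgue. x \<in> \<Omega> \<inter> ball c r \<longrightarrow> 0 < phi_inv \<phi> x \<tau>"
        using pos by (auto elim: eventually_mono)
      have mpos: "0 < measure lebesgue (ball c r)"
        using content_ball_pos[OF r(1), of c] by simp
      have "measure lebesgue (ball c r) \<le> 1 / \<tau>" using r(2) by blast
      then have tb: "\<tau> \<le> 1 / measure lebesgue (ball c r)"
        using mpos tau by (simp add: field_simps)
      show "AE x in lebesgue. x \<in> \<Omega> \<inter> ball c r \<longrightarrow> (AE y in lebesgue. y \<in> \<Omega> \<inter> ball c r \<longrightarrow> \<beta> * phi_inv \<phi> x \<tau> \<le> phi_inv \<phi> y \<tau>)"
        using A1[rule_format, OF r(1), of c]
      proof (rule eventually_mono)
        fix x assume hx: "x \<in> \<Omega> \<inter> ball c r \<longrightarrow>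
          (AE y in lebesgue. y \<in> \<Omega> \<inter> ball c r \<longrightarrow>
            (\<forall>\<tau>. 1 \<le> \<tau> \<and> \<tau> \<le> 1 / measure lebesgue (ball c r) \<longrightarrow>
               \<beta> * phi_inv \<phi> x \<tau> \<le> phi_inv \<phi> y \<tau>))"
        show "x \<in> \<Omega> \<inter> ball c r \<longrightarrow> (AE y in lebesgue. y \<in> \<Omega> \<inter> ball c r \<longrightarrow> \<beta> * phi_inv \<phi> x \<tau> \<le> phi_inv \<phi> y \<tau>)"
        proof
          assume "x \<in> \<Omega> \<inter> ball c r"
          with hx have "AE y in lebesgue. y \<in> \<Omega> \<inter> ball c r \<longrightarrow>
            (\<forall>\<tau>. 1 \<le> \<tau> \<and> \<tau> \<le> 1 / measure lebesgue (ball c r) \<longrightarrow>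
               \<beta> * phi_inv \<phi> x \<tau> \<le> phi_inv \<phi> y \<tau>)" by blast
          then show "AE y in lebesgue. y \<in> \<Omega> \<inter> ball c r \<longrightarrow> \<beta> * phi_inv \<phi> x \<tau> \<le> phi_inv \<phi> y \<tau>"
          proof (rule eventually_mono)
            fix y assume "y \<in> \<Omega> \<inter> ball c r \<longrightarrow>
            (\<forall>\<tau>. 1 \<le> \<tau> \<and> \<tau> \<le> 1 / measure lebesgue (ball c r) \<longrightarrow>
               \<beta> * phi_inv \<phi> x \<tau> \<le> phi_inv \<phi> y \<tau>)"
            then show "y \<in> \<Omega> \<inter> ball c r \<longrightarrow> \<beta> * phi_inv \<phi> x \<tau> \<le> phi_inv \<phi> y \<tau>"
              using tau tb by blast
          qed
        qed
      qed
    qed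
  qed
  then have "\<exists>Lf. \<forall>c\<in>K. \<exists>U. 0 < Lf c \<and> (AE x in lebesgue. x \<in> \<Omega> \<inter> ball c r \<longrightarrow> Lf c \<le> phi_inv \<phi> x \<tau> \<and> phi_inv \<phi> x \<tau> \<le> U)"
    by (rule bchoice)
  then obtain Lf where "\<forall>c\<in>K. \<exists>U. 0 < Lf c \<and> (AE x in lebesgue. x \<in> \<Omega> \<inter> ball c r \<longrightarrow> Lf c \<le> phi_inv \<phi> x \<tau> \<and> phi_inv \<phi> x \<tau> \<le> U)"
    by blast
  then have "\<exists>Uf. \<forall>c\<in>K. 0 < Lf c \<and> (AE x in lebesgue. x \<in> \<Omega> \<inter> ball c r \<longrightarrow> Lf c \<le> phi_inv \<phi> x \<tau> \<and> phi_inv \<phi> x \<tau> \<le> Uf c)"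
    by (rule bchoice)
  then obtain Uf where LU: "\<forall>c\<in>K. 0 < Lf c \<and> (AE x in lebesgue. x \<in> \<Omega> \<inter> ball c r \<longrightarrow> Lf c \<le> phi_inv \<phi> x \<tau> \<and> phi_inv \<phi> x \<tau> \<le> Uf c)"
    by blast
  define L where "L = Min (insert 1 (Lf ` K))"
  define U where "U = Max (insert 1 (Uf ` K))"
  have L0: "0 < L" using K(1) LU by (auto simp: L_def)
  have "AE x in lebesgue. \<forall>c\<in>K. x \<in> \<Omega> \<inter> ball c r \<longrightarrow> Lf c \<le> phi_inv \<phi> x \<tau> \<and> phi_inv \<phi> x \<tau> \<le> Uf c"
    by (rule AE_finite_allI[OF K(1)]) (use LU in auto)
  then have "AE x in lebesgue. x \<in> \<Omega> \<longrightarrow> L \<le> phi_inv \<phi> x \<tau> \<and> phi_inv \<phi> x \<tau> \<le> U"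
  proof (rule eventually_mono)
    fix x assume h: "\<forall>c\<in>K. x \<in> \<Omega> \<inter> ball c r \<longrightarrow> Lf c \<le> phi_inv \<phi> x \<tau> \<and> phi_inv \<phi> x \<tau> \<le> Uf c"
    show "x \<in> \<Omega> \<longrightarrow> L \<le> phi_inv \<phi> x \<tau> \<and> phi_inv \<phi> x \<tau> \<le> U"
    proof
      assume x: "x \<in> \<Omega>"
      then obtain c where c: "c \<in> K" "x \<in> ball c r" using R K(2) by blast
      have "L \<le> Lf c" unfolding L_def using K(1) c(1) by (intro Min_le) auto
      moreover have "Uf c \<le> U" unfolding U_def using K(1) c(1) by (intro Max_ge) auto
      moreover have "Lf c \<le> phi_inv \<phi> x \<tau> \<and> phi_inv \<phi> x \<tau> \<le> Uf c" using h c x by blast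
      ultimately show "L \<le> phi_inv \<phi> x \<tau> \<and> phi_inv \<phi> x \<tau> \<le> U" by linarith
    qed
  qed
  with L0 show ?thesis by blast
qed

lemma fin_leb:
  fixes \<Omega> :: "'a::euclidean_space set"
  assumes "bounded \<Omega>" shows "finite_measure (lebesgue_on \<Omega>)"
proof
  obtain R where R: "\<Omega> \<subseteq> cball (0::'a) R"
  proof -
    obtain b where "\<forall>x\<in>\<Omega>. norm x \<le> b" using assms bounded_pos by blast
    then have "\<Omega> \<subseteq> cball (0::'a) b" by (auto simp: mem_cball_0)
    then show ?thesis by (rule that)
  qed
  have "emeasure lebesgue \<Omega> \<le> emeasure lebesgue (cball (0::'a) R)"
    by (rule emeasure_mono) (use R in auto)
  also have "\<dots> = emeasure lborel (cball (0::'a) R)"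
    by simp
  also have "\<dots> < \<infinity>" by (rule emeasure_bounded_finite) simp
  finally have f: "emeasure lebesgue \<Omega> < \<infinity>" .
  have "emeasure (lebesgue_on \<Omega>) (space (lebesgue_on \<Omega>)) \<le> emeasure lebesgue \<Omega>"
    unfolding space_restrict_space by (simp add: restrict_space_def emeasure_measure_of_conv)
  then show "emeasure (lebesgue_on \<Omega>) (space (lebesgue_on \<Omega>)) \<noteq> \<infinity>" using f by auto
qed

theorem proposition3p2:
  fixes \<Omega> :: "'a::euclidean_space set" and \<phi> :: "'a \<Rightarrow> real \<Rightarrow> ennreal"
  assumes "bounded \<Omega>" and "weak_Phi \<Omega> \<phi>" and "cond_A1 \<Omega> \<phi>"
  shows "cond_A0 \<Omega> \<phi> \<and> cond_A2 \<Omega> \<phi>"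
proof
  obtain a where W: "AE x in lebesgue. x \<in> \<Omega> \<longrightarrow>
         (\<forall>s t. 0 \<le> s \<and> s \<le> t \<longrightarrow> \<phi> x s \<le> \<phi> x t) \<and>
         \<phi> x 0 = 0 \<and> (\<phi> x \<longlongrightarrow> 0) (at_right 0) \<and>
         (\<phi> x \<longlongrightarrow> \<infinity>) at_top \<and>
         almost_increasing_quot a (\<phi> x)"
    using assms(2) unfolding weak_Phi_def by (elim exE conjE) (rule that; assumption)
  have NE: "AE x in lebesgue. x \<in> \<Omega> \<longrightarrow> (\<forall>\<tau>. {t. 0 \<le> t \<and> ennreal \<tau> \<le> \<phi> x t} \<noteq> {})"
    using W
  proof (rule eventually_mono)
    fix x assume h: "x \<in> \<Omega> \<longrightarrow>
         (\<forall>s t. 0 \<le> s \<and> s \<le> t \<longrightarrow> \<phi> x s \<le> \<phi> x t) \<and>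
         \<phi> x 0 = 0 \<and> (\<phi> x \<longlongrightarrow> 0) (at_right 0) \<and>
         (\<phi> x \<longlongrightarrow> \<infinity>) at_top \<and>
         almost_increasing_quot a (\<phi> x)"
    show "x \<in> \<Omega> \<longrightarrow> (\<forall>\<tau>. {t. 0 \<le> t \<and> ennreal \<tau> \<le> \<phi> x t} \<noteq> {})"
    proof (intro impI allI)
      fix \<tau> :: real assume x: "x \<in> \<Omega>"
      note hx = mp[OF h x]
      note li = hx[THEN conjunct2, THEN conjunct2, THEN conjunct2, THEN conjunct1]
      show "{t. 0 \<le> t \<and> ennreal \<tau> \<le> \<phi> x t} \<noteq> {}" by (rule phi_nonempty[OF li])
    qed
  qed
  obtain L1 U1 where L1: "0 < L1" and B1: "AE x in lebesgue. x \<in> \<Omega> \<longrightarrow> L1 \<le> phi_inv \<phi> x 1 \<and> phi_inv \<phi> x 1 \<le> U1"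
    using bounds_tau[OF assms, of 1] by auto
  show "cond_A0 \<Omega> \<phi>"
    unfolding cond_A0_def
  proof (intro exI[of _ "min 1 (min L1 (1 / max U1 1))"] conjI)
    show "0 < min 1 (min L1 (1 / max U1 1))" using L1 by simp
    show "min 1 (min L1 (1 / max U1 1)) \<le> 1" by simp
    show "AE x in lebesgue. x \<in> \<Omega> \<longrightarrow> min 1 (min L1 (1 / max U1 1)) \<le> phi_inv \<phi> x 1 \<and>
        phi_inv \<phi> x 1 \<le> 1 / min 1 (min L1 (1 / max U1 1))"
      using B1
    proof (rule eventually_mono)
      fix x assume h: "x \<in> \<Omega> \<longrightarrow> L1 \<le> phi_inv \<phi> x 1 \<and> phi_inv \<phi> x 1 \<le> U1"
      have m: "1 / min 1 (min L1 (1 / max U1 1)) \<ge> max U1 1"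
      proof -
        have p: "0 < min 1 (min L1 (1 / max U1 1))" using L1 by simp
        have "min 1 (min L1 (1 / max U1 1)) \<le> 1 / max U1 1" by simp
        then have "1 / (1 / max U1 1) \<le> 1 / min 1 (min L1 (1 / max U1 1))"
          by (rule divide_left_mono) (use p in auto)
        then show ?thesis by simp
      qed
      show "x \<in> \<Omega> \<longrightarrow> min 1 (min L1 (1 / max U1 1)) \<le> phi_inv \<phi> x 1 \<and>
        phi_inv \<phi> x 1 \<le> 1 / min 1 (min L1 (1 / max U1 1))"
        using h m by auto
    qed
  qed
  show "cond_A2 \<Omega> \<phi>"
    unfolding cond_A2_def
  proof (intro allI impI)
    fix \<sigma> :: real assume "0 < \<sigma>"
    obtain L2 U2 where B2: "AE x in lebesgue. x \<in> \<Omega> \<longrightarrow> L2 \<le> phi_inv \<phi> x (max \<sigma> 1) \<and> phi_inv \<phi> x (max \<sigma> 1) \<le> U2"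
      using bounds_tau[OF assms, of "max \<sigma> 1"] by auto
    define V where "V = max U2 1"
    define \<beta> where "\<beta> = min 1 (L1 / V)"
    have V: "1 \<le> V" by (simp add: V_def)
    have \<beta>0: "0 < \<beta>" using L1 V by (simp add: \<beta>_def)
    have \<beta>V: "\<beta> * V \<le> L1"
    proof -
      have "\<beta> \<le> L1 / V" by (simp add: \<beta>_def)
      then show ?thesis using V by (simp add: field_simps)
    qed
    show "\<exists>\<beta> h. 0 < \<beta> \<and> \<beta> \<le> 1 \<and> integrable (lebesgue_on \<Omega>) h \<and>
       (\<exists>M. AE x in lebesgue_on \<Omega>. \<bar>h x\<bar> \<le> M) \<and> (\<forall>x\<in>\<Omega>. 0 \<le> h x) \<and>
       (AE x in lebesgue. x \<in> \<Omega> \<longrightarrow> (AE y in lebesgue. y \<in> \<Omega> \<longrightarrow>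
          (\<forall>\<tau>. 0 \<le> \<tau> \<and> \<tau> \<le> \<sigma> \<longrightarrow> \<beta> * phi_inv \<phi> x \<tau> \<le> phi_inv \<phi> y (\<tau> + h x + h y))))"
    proof (rule exI[of _ \<beta>], rule exI[of _ "\<lambda>_. 1/2"], intro conjI)
      show "0 < \<beta>" by (rule \<beta>0)
      show "\<beta> \<le> 1" by (simp add: \<beta>_def)
      show "integrable (lebesgue_on \<Omega>) (\<lambda>_. 1 / 2 :: real)"
        by (rule finite_measure.integrable_const[OF fin_leb[OF assms(1)]])
      have "AE x in lebesgue_on \<Omega>. \<bar>1 / 2 :: real\<bar> \<le> 1" by simp
      then show "\<exists>M. AE x in lebesgue_on \<Omega>. \<bar>1 / 2 :: real\<bar> \<le> M" by blast
      show "\<forall>x\<in>\<Omega>. 0 \<le> (1 / 2 :: real)" by simp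
      have GX: "AE x in lebesgue. x \<in> \<Omega> \<longrightarrow> (\<forall>\<tau>. 0 \<le> \<tau> \<and> \<tau> \<le> \<sigma> \<longrightarrow> \<beta> * phi_inv \<phi> x \<tau> \<le> L1)"
        using B2 NE
      proof (eventually_elim)
        case (elim x)
        show ?case
        proof (intro impI allI)
          fix \<tau> assume x: "x \<in> \<Omega>" and t: "0 \<le> \<tau> \<and> \<tau> \<le> \<sigma>"
          have "phi_inv \<phi> x \<tau> \<le> phi_inv \<phi> x (max \<sigma> 1)"
            unfolding phi_inv_def by (rule inv_mono) (use elim x t in auto)
          also have "\<dots> \<le> V" using elim x by (auto simp: V_def)
          finally have "\<beta> * phi_inv \<phi> x \<tau> \<le> \<beta> * V" using \<beta>0 by simp
          then show "\<beta> * phi_inv \<phi> x \<tau> \<le> L1" using \<beta>V by simp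
        qed
      qed
      have GY: "AE y in lebesgue. y \<in> \<Omega> \<longrightarrow> (\<forall>\<tau>. 0 \<le> \<tau> \<longrightarrow> L1 \<le> phi_inv \<phi> y (\<tau> + 1 / 2 + 1 / 2))"
        using B1 NE
      proof (eventually_elim)
        case (elim y)
        show ?case
        proof (intro impI allI)
          fix \<tau> :: real assume y: "y \<in> \<Omega>" and t: "0 \<le> \<tau>"
          have "L1 \<le> phi_inv \<phi> y 1" using elim y by auto
          have ne: "{t. 0 \<le> t \<and> ennreal (\<tau> + 1 / 2 + 1 / 2) \<le> \<phi> y t} \<noteq> {}"
            using elim y by blast
          have "phi_inv \<phi> y 1 \<le> phi_inv \<phi> y (\<tau> + 1 / 2 + 1 / 2)"
            unfolding phi_inv_def by (rule inv_mono[OF ne]) (use t in simp)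
          with \<open>L1 \<le> phi_inv \<phi> y 1\<close> show "L1 \<le> phi_inv \<phi> y (\<tau> + 1 / 2 + 1 / 2)" by linarith
        qed
      qed
      show "AE x in lebesgue. x \<in> \<Omega> \<longrightarrow> (AE y in lebesgue. y \<in> \<Omega> \<longrightarrow>
          (\<forall>\<tau>. 0 \<le> \<tau> \<and> \<tau> \<le> \<sigma> \<longrightarrow> \<beta> * phi_inv \<phi> x \<tau> \<le> phi_inv \<phi> y (\<tau> + 1 / 2 + 1 / 2)))"
        using GX
      proof (rule eventually_mono)
        fix x assume hx: "x \<in> \<Omega> \<longrightarrow> (\<forall>\<tau>. 0 \<le> \<tau> \<and> \<tau> \<le> \<sigma> \<longrightarrow> \<beta> * phi_inv \<phi> x \<tau> \<le> L1)"
        show "x \<in> \<Omega> \<longrightarrow> (AE y in lebesgue. y \<in> \<Omega> \<longrightarrow>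
          (\<forall>\<tau>. 0 \<le> \<tau> \<and> \<tau> \<le> \<sigma> \<longrightarrow> \<beta> * phi_inv \<phi> x \<tau> \<le> phi_inv \<phi> y (\<tau> + 1 / 2 + 1 / 2)))"
        proof
          assume x: "x \<in> \<Omega>"
          show "AE y in lebesgue. y \<in> \<Omega> \<longrightarrow>
            (\<forall>\<tau>. 0 \<le> \<tau> \<and> \<tau> \<le> \<sigma> \<longrightarrow> \<beta> * phi_inv \<phi> x \<tau> \<le> phi_inv \<phi> y (\<tau> + 1 / 2 + 1 / 2))"
            using GY by (rule eventually_mono) (use hx x in \<open>blast intro: order_trans\<close>)
        qed
      qed
    qed
  qed
qed

end
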